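(* Let $k$ be a field and $d\in\mathbb{N}$. Consider the morphisms $$\mathrm{d}\beta_d:Q_d\times\mathcal{L}\mathbb{G}_m\times A_d\times\mathcal{L}\mathbb{A}^1\to Q_d\times\mathcal{L}\mathbb{G}_m\times\mathcal{L}\mathbb{A}^1,\quad (q,u,a,v)\mapsto(q,u,ua+qv),$$ $$\alpha_d:Q_d\times A_d\times\mathcal{L}\mathbb{A}^1\to Q_d\times\mathcal{L}\mathbb{A}^1,\quad (q,a,v)\mapsto(q,qv+a).$$ Both are surjective on $k$-points and induce formally smooth morphisms on formal completions at $k$-points. At $k$-points lying over $q=t^d$, they induce isomorphisms on formal completions.
   Context: $Q_d$ is the affine space of monic polynomials of degree $d$ in $R[t]$; $A_d$ is the $d$-dimensional affine space of polynomials of degree $<d$ in $R[t]$; $\mathcal{L}\mathbb{A}^1$ represents $R\mapsto R[[t]]$; $\mathcal{L}\mathbb{G}_m$ represents $R\mapsto R[[t]]^\times$. Formal smoothness refers to the infinitesimal lifting property for Artinian local $k$-algebras. *)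

theory Defs
  imports "HOL-Computational_Algebra.Computational_Algebra"
begin

definition is_rhom :: "('a::comm_ring_1 \<Rightarrow> 'b::comm_ring_1) \<Rightarrow> bool" where
  "is_rhom f \<longleftrightarrow> f 1 = 1 \<and> (\<forall>x y. f (x + y) = f x + f y) \<and> (\<forall>x y. f (x * y) = f x * f y)"

definition is_ideal :: "'a::comm_ring_1 set \<Rightarrow> bool" where
  "is_ideal I \<longleftrightarrow> 0 \<in> I \<and> (\<forall>x\<in>I. \<forall>y\<in>I. x + y \<in> I) \<and> (\<forall>x\<in>I. \<forall>r. r * x \<in> I)"

definition artinian :: "'a::comm_ring_1 itself \<Rightarrow> bool" where
  "artinian _ \<longleftrightarrow> (\<forall>I :: nat \<Rightarrow> 'a set. (\<forall>n. is_ideal (I n) \<and> I (Suc n) \<subseteq> I n)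
       \<longrightarrow> (\<exists>N. \<forall>n\<ge>N. I n = I N))"

text \<open>A k-algebra (structure map phi) which is Artinian and local with residue field k,
  the residue map being pi: the non-units are exactly the kernel of pi (so R is local with
  maximal ideal ker pi) and pi o phi = id (so R / ker pi = k).\<close>
definition art_k :: "('k::field \<Rightarrow> 'r::comm_ring_1) \<Rightarrow> ('r \<Rightarrow> 'k) \<Rightarrow> bool" where
  "art_k \<phi> \<pi> \<longleftrightarrow> is_rhom \<phi> \<and> is_rhom \<pi> \<and> (\<forall>c. \<pi> (\<phi> c) = c)
      \<and> (\<forall>x. x dvd 1 \<longleftrightarrow> \<pi> x \<noteq> 0) \<and> artinian TYPE('r)"

definition art_hom :: "('k::field \<Rightarrow> 'r::comm_ring_1) \<Rightarrow> ('r \<Rightarrow> 'k) \<Rightarrow> ('k \<Rightarrow> 's::comm_ring_1)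
     \<Rightarrow> ('s \<Rightarrow> 'k) \<Rightarrow> ('r \<Rightarrow> 's) \<Rightarrow> bool" where
  "art_hom \<phi> \<pi> \<phi>' \<pi>' g \<longleftrightarrow> is_rhom g \<and> (\<forall>c. g (\<phi> c) = \<phi>' c) \<and> (\<forall>x. \<pi>' (g x) = \<pi> x)"

definition fps_map :: "('a \<Rightarrow> 'b) \<Rightarrow> 'a fps \<Rightarrow> 'b fps" where
  "fps_map g f = Abs_fps (\<lambda>n. g (fps_nth f n))"

definition Qd :: "nat \<Rightarrow> 'a::comm_ring_1 poly set" where
  "Qd d = {q. degree q = d \<and> lead_coeff q = 1}"

definition Ad :: "nat \<Rightarrow> 'a::comm_ring_1 poly set" where
  "Ad d = {a. \<forall>i\<ge>d. coeff a i = 0}"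

text \<open>LG_m(R) = R[[t]]^x ; LA^1(R) = R[[t]] (all of 'a fps).\<close>
definition LGm :: "'a::comm_ring_1 fps set" where
  "LGm = {u. u dvd 1}"

definition dbeta_src :: "nat \<Rightarrow> ('a::comm_ring_1 poly \<times> 'a fps \<times> 'a poly \<times> 'a fps) set" where
  "dbeta_src d = Qd d \<times> LGm \<times> Ad d \<times> UNIV"

definition dbeta_tgt :: "nat \<Rightarrow> ('a::comm_ring_1 poly \<times> 'a fps \<times> 'a fps) set" where
  "dbeta_tgt d = Qd d \<times> LGm \<times> UNIV"

definition dbeta :: "'a::comm_ring_1 poly \<times> 'a fps \<times> 'a poly \<times> 'a fps \<Rightarrow> 'a poly \<times> 'a fps \<times> 'a fps" where
  "dbeta x = (case x of (q, u, a, v) \<Rightarrow> (q, u, u * fps_of_poly a + fps_of_poly q * v))"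

definition alpha_src :: "nat \<Rightarrow> ('a::comm_ring_1 poly \<times> 'a poly \<times> 'a fps) set" where
  "alpha_src d = Qd d \<times> Ad d \<times> UNIV"

definition alpha_tgt :: "nat \<Rightarrow> ('a::comm_ring_1 poly \<times> 'a fps) set" where
  "alpha_tgt d = Qd d \<times> UNIV"

definition alpha :: "'a::comm_ring_1 poly \<times> 'a poly \<times> 'a fps \<Rightarrow> 'a poly \<times> 'a fps" where
  "alpha x = (case x of (q, a, v) \<Rightarrow> (q, fps_of_poly q * v + fps_of_poly a))"

definition bc_dbeta_src :: "('a::comm_ring_1 \<Rightarrow> 'b::comm_ring_1) \<Rightarrow> 'a poly \<times> 'a fps \<times> 'a poly \<times> 'a fps
    \<Rightarrow> 'b poly \<times> 'b fps \<times> 'b poly \<times> 'b fps" where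
  "bc_dbeta_src g x = (case x of (q, u, a, v) \<Rightarrow> (map_poly g q, fps_map g u, map_poly g a, fps_map g v))"

definition bc_dbeta_tgt :: "('a::comm_ring_1 \<Rightarrow> 'b::comm_ring_1) \<Rightarrow> 'a poly \<times> 'a fps \<times> 'a fps
    \<Rightarrow> 'b poly \<times> 'b fps \<times> 'b fps" where
  "bc_dbeta_tgt g x = (case x of (q, u, w) \<Rightarrow> (map_poly g q, fps_map g u, fps_map g w))"

definition bc_alpha_src :: "('a::comm_ring_1 \<Rightarrow> 'b::comm_ring_1) \<Rightarrow> 'a poly \<times> 'a poly \<times> 'a fps
    \<Rightarrow> 'b poly \<times> 'b poly \<times> 'b fps" where
  "bc_alpha_src g x = (case x of (q, a, v) \<Rightarrow> (map_poly g q, map_poly g a, fps_map g v))"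

definition bc_alpha_tgt :: "('a::comm_ring_1 \<Rightarrow> 'b::comm_ring_1) \<Rightarrow> 'a poly \<times> 'a fps
    \<Rightarrow> 'b poly \<times> 'b fps" where
  "bc_alpha_tgt g x = (case x of (q, w) \<Rightarrow> (map_poly g q, fps_map g w))"

text \<open>Given a surjection g : R -> R' of Artinian local k-algebras with residue maps,
  SR, SR' are the source points over R, R'; TR the target points over R;
  redS, redS' reduce source points to k-points, redT reduces target points over R;
  bS, bT base change along g; fR, fR', fk the morphism on R-, R'-, k-points.
  Condition: every R'-point y' of the source completion at x together with an R-point z of the
  target completion at f(x) with f(y') = g(z) lifts to an R-point y of the source completion
  at x with g(y) = y' and f(y) = z.\<close>
definition lifts where
  "lifts SR SR' TR redS redS' redT bS bT fR fR' fk x \<longleftrightarrow>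
     (\<forall>y'\<in>SR'. \<forall>z\<in>TR. redS' y' = x \<longrightarrow> redT z = fk x \<longrightarrow> fR' y' = bT z \<longrightarrow>
        (\<exists>y\<in>SR. redS y = x \<and> bS y = y' \<and> fR y = z))"

end

theory Submission
  imports Defs
begin


lemma rhom_0: "is_rhom f \<Longrightarrow> f 0 = 0"
proof -
  assume h: "is_rhom f"
  have "f (0+0) = f 0 + f 0" using h unfolding is_rhom_def by blast
  thus ?thesis by simp
qed

lemma rhom_add: "is_rhom f \<Longrightarrow> f (x + y) = f x + f y"
  unfolding is_rhom_def by blast
lemma rhom_mult: "is_rhom f \<Longrightarrow> f (x * y) = f x * f y"
  unfolding is_rhom_def by blast
lemma rhom_1: "is_rhom f \<Longrightarrow> f 1 = 1"
  unfolding is_rhom_def by blast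
lemma rhom_neg: "is_rhom f \<Longrightarrow> f (- x) = - f x"
proof -
  assume h: "is_rhom f"
  have "f (x + - x) = f x + f (-x)" using rhom_add[OF h] .
  hence "0 = f x + f (-x)" using rhom_0[OF h] by simp
  thus ?thesis by (simp add: eq_neg_iff_add_eq_0 add.commute)
qed
lemma rhom_diff: "is_rhom f \<Longrightarrow> f (x - y) = f x - f y"
  using rhom_add[of f x "-y"] rhom_neg[of f y] by simp
lemma rhom_sum: "is_rhom f \<Longrightarrow> f (sum h A) = sum (\<lambda>i. f (h i)) A"
  by (induction A rule: infinite_finite_induct) (simp_all add: rhom_0 rhom_add)
lemma rhom_id: "is_rhom id" unfolding is_rhom_def by simp

lemma fps_map_nth [simp]: "fps_map g f $ n = g (f $ n)"
  unfolding fps_map_def by simp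

lemma fps_map_mult: "is_rhom g \<Longrightarrow> fps_map g (a * b) = fps_map g a * fps_map g b"
  by (rule fps_ext) (simp add: fps_mult_nth rhom_sum rhom_mult)
lemma fps_map_add: "is_rhom g \<Longrightarrow> fps_map g (a + b) = fps_map g a + fps_map g b"
  by (rule fps_ext) (simp add: rhom_add)
lemma fps_map_diff: "is_rhom g \<Longrightarrow> fps_map g (a - b) = fps_map g a - fps_map g b"
  by (rule fps_ext) (simp add: rhom_diff)
lemma fps_map_0: "is_rhom g \<Longrightarrow> fps_map g 0 = 0"
  by (rule fps_ext) (simp add: rhom_0)
lemma fps_map_1: "is_rhom g \<Longrightarrow> fps_map g 1 = 1"
  by (rule fps_ext) (simp add: rhom_0 rhom_1)
lemma fps_map_poly: "g 0 = 0 \<Longrightarrow> fps_map g (fps_of_poly p) = fps_of_poly (map_poly g p)"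
  by (rule fps_ext) (simp add: coeff_map_poly)
lemma fps_map_comp: "fps_map f (fps_map g a) = fps_map (f \<circ> g) a"
  by (rule fps_ext) simp
lemma fps_map_unit: "is_rhom g \<Longrightarrow> u dvd 1 \<Longrightarrow> fps_map g u dvd 1"
  by (metis dvdE dvdI fps_map_1 fps_map_mult)

lemma map_poly_mult: "is_rhom g \<Longrightarrow> map_poly g (p * q) = map_poly g p * map_poly g q"
  by (metis fps_map_mult fps_map_poly fps_of_poly_eq_iff fps_of_poly_mult rhom_0)
lemma map_poly_add: "is_rhom g \<Longrightarrow> map_poly g (p + q) = map_poly g p + map_poly g q"
  by (metis fps_map_add fps_map_poly fps_of_poly_eq_iff fps_of_poly_add rhom_0)
lemma map_poly_diff: "is_rhom g \<Longrightarrow> map_poly g (p - q) = map_poly g p - map_poly g q"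
  by (metis fps_map_diff fps_map_poly fps_of_poly_eq_iff fps_of_poly_diff rhom_0)

lemma triv_ring: "(1::'a::comm_ring_1) = 0 \<Longrightarrow> (x::'a) = 0"
  by (metis mult_1_right mult_zero_right)
lemma triv_fps: "(1::'a::comm_ring_1) = 0 \<Longrightarrow> (x::'a fps) = 0"
  by (rule fps_ext) (simp add: triv_ring)
lemma triv_poly: "(1::'a::comm_ring_1) = 0 \<Longrightarrow> (x::'a poly) = 0"
  by (rule poly_eqI) (simp add: triv_ring)

lemma nilp_add:
  fixes a b :: "'a::comm_ring_1"
  assumes "a ^ n1 = 0" "b ^ n2 = 0" shows "(a + b) ^ (n1 + n2) = 0"
proof -
  have "(a+b)^(n1+n2) = (\<Sum>k\<le>n1+n2. of_nat ((n1+n2) choose k) * a^k * b^(n1+n2-k))"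
    by (rule binomial_ring)
  also have "\<dots> = 0"
  proof (rule sum.neutral, safe)
    fix k assume "k \<le> n1 + n2"
    show "of_nat ((n1+n2) choose k) * a^k * b^(n1+n2-k) = 0"
    proof (cases "k \<ge> n1")
      case True
      hence "a^k = a^n1 * a^(k-n1)" by (simp add: power_add[symmetric])
      thus ?thesis using assms by simp
    next
      case False
      hence e: "n1+n2-k = n2+(n1-k)" by simp
      have "b^(n1+n2-k) = b^n2 * b^(n1 - k)" by (simp only: e power_add)
      thus ?thesis using assms by simp
    qed
  qed
  finally show ?thesis .
qed

lemma nilp_sum:
  fixes h :: "'b \<Rightarrow> 'a::comm_ring_1"
  assumes "finite A" "\<forall>i\<in>A. \<exists>n. h i ^ n = 0" shows "\<exists>n. sum h A ^ n = 0"
  using assms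
proof (induction A rule: finite_induct)
  case empty then show ?case by (intro exI[of _ 1]) simp
next
  case (insert x F)
  then obtain n1 n2 where "h x ^ n1 = 0" "sum h F ^ n2 = 0" by auto
  then show ?case using insert nilp_add by (metis sum.insert)
qed

lemma split_pow:
  fixes b c :: "'a::comm_ring_1"
  shows "\<exists>Y. (b + c) ^ n = b * Y + c ^ n"
proof (induction n)
  case 0 then show ?case by (intro exI[of _ 0]) simp
next
  case (Suc n)
  then obtain Y where "(b + c) ^ n = b * Y + c ^ n" by blast
  hence "(b+c)^Suc n = b * ((b+c)*Y + c^n) + c ^ Suc n" by (simp add: algebra_simps)
  then show ?case by blast
qed


lemma art_nilp:
  fixes \<phi> :: "'k::field \<Rightarrow> 'r::comm_ring_1"
  assumes A: "art_k \<phi> \<pi>" and x: "\<pi> x = 0"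
  shows "\<exists>n. x ^ n = 0"
proof -
  define I where "I n = range (\<lambda>r. x ^ n * r)" for n
  have "\<forall>n. is_ideal (I n) \<and> I (Suc n) \<subseteq> I n"
  proof
    fix n
    have "is_ideal (I n)" unfolding is_ideal_def I_def
    proof (intro conjI ballI allI)
      show "0 \<in> range (\<lambda>r. x ^ n * r)" by (rule range_eqI[of _ _ 0], simp)
    next
      fix a b assume "a \<in> range (\<lambda>r. x ^ n * r)" "b \<in> range (\<lambda>r. x ^ n * r)"
      then obtain r s where "a = x ^ n * r" "b = x ^ n * s" by blast
      hence "a + b = x ^ n * (r + s)" by (simp add: distrib_left)
      thus "a + b \<in> range (\<lambda>r. x ^ n * r)" by blast
    next
      fix a c assume "a \<in> range (\<lambda>r. x ^ n * r)"
      then obtain r where "a = x ^ n * r" by blast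
      hence "c * a = x ^ n * (c * r)" by (simp add: mult.left_commute)
      thus "c * a \<in> range (\<lambda>r. x ^ n * r)" by blast
    qed
    moreover have "I (Suc n) \<subseteq> I n" unfolding I_def
    proof
      fix y assume "y \<in> range (\<lambda>r. x ^ Suc n * r)"
      then obtain r where "y = x ^ Suc n * r" by blast
      moreover have "x ^ Suc n * r = x ^ n * (x * r)" by (simp add: algebra_simps)
      ultimately have "y = x ^ n * (x * r)" by simp
      thus "y \<in> range (\<lambda>r. x ^ n * r)" by blast
    qed
    ultimately show "is_ideal (I n) \<and> I (Suc n) \<subseteq> I n" by blast
  qed
  moreover have "artinian TYPE('r)" using A unfolding art_k_def by blast
  ultimately obtain N where N: "\<forall>n\<ge>N. I n = I N" unfolding artinian_def by blast
  have "x ^ N \<in> I N" unfolding I_def by (auto intro: range_eqI[of _ _ 1])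
  moreover have "I (Suc N) = I N" by (rule N[rule_format]) simp
  ultimately have "x ^ N \<in> I (Suc N)" by simp
  then obtain r where r: "x ^ N = x ^ Suc N * r" unfolding I_def by blast
  have hp: "is_rhom \<pi>" using A unfolding art_k_def by blast
  have "\<pi> (1 - x * r) = 1" using hp x by (simp add: rhom_diff rhom_mult rhom_1)
  hence "(1 - x * r) dvd 1" using A unfolding art_k_def by simp
  then obtain c where c: "1 = (1 - x * r) * c" by (auto elim: dvdE)
  have "x ^ N * (1 - x * r) = x ^ N - x ^ Suc N * r" by (simp add: algebra_simps)
  also have "\<dots> = 0" by (simp only: r[symmetric] diff_self)
  finally have "x ^ N * (1 - x * r) = 0" .
  hence "x ^ N * (1 - x * r) * c = 0" by simp
  hence "x ^ N = 0" by (metis c mult.assoc mult_1_right)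
  thus ?thesis by blast
qed

lemma poly_monic_uniq:
  fixes q s r :: "'a::comm_ring_1 poly"
  assumes q1: "coeff q d = 1" and q2: "\<forall>i>d. coeff q i = 0"
    and r: "\<forall>i\<ge>d. coeff r i = 0" and e: "q * s + r = 0"
  shows "s = 0"
proof (cases "(1::'a) = 0")
  case True thus ?thesis by (rule triv_poly)
next
  case False
  have "degree q \<le> d" using q2 by (intro degree_le) simp
  moreover have "d \<le> degree q" using q1 False by (intro le_degree) simp
  ultimately have dq: "degree q = d" by simp
  show "s = 0"
  proof (rule ccontr)
    assume sn: "s \<noteq> 0"
    have "coeff (q * s) (d + degree s) = lead_coeff s"
      using coeff_mult_degree_sum[of q s] dq q1 by simp
    moreover have "lead_coeff s \<noteq> 0" using sn by simp
    moreover have "coeff r (d + degree s) = 0" using r by simp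
    moreover have "coeff (q * s + r) (d + degree s) = 0" using e by simp
    ultimately show False by simp
  qed
qed

lemma fps_cutoff_sum: "fps_cutoff m f = (\<Sum>i<m. fps_const (f$i) * fps_X^i)"
proof (rule fps_ext)
  fix n
  have "(\<Sum>i<m. fps_const (f$i) * fps_X^i) $ n = (\<Sum>i<m. f$i * (if n = i then 1 else 0))"
    by (simp add: fps_sum_nth)
  also have "\<dots> = (\<Sum>i<m. if i = n then f $ i else 0)"
    by (rule sum.cong) auto
  also have "\<dots> = fps_cutoff m f $ n" by (simp add: sum.delta')
  finally show "fps_cutoff m f $ n = (\<Sum>i<m. fps_const (f$i) * fps_X^i) $ n" by simp
qed

lemma fps_cutoff_nilp:
  fixes f :: "'a::comm_ring_1 fps"
  assumes "\<forall>i<m. \<exists>n. (f $ i) ^ n = 0"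
  shows "\<exists>M. fps_cutoff m f ^ M = 0"
  unfolding fps_cutoff_sum
proof (rule nilp_sum)
  show "\<forall>i\<in>{..<m}. \<exists>n. (fps_const (f $ i) * fps_X ^ i) ^ n = 0"
  proof
    fix i assume "i \<in> {..<m}"
    then obtain n where "(f $ i) ^ n = 0" using assms by auto
    hence "(fps_const (f $ i) * fps_X ^ i) ^ n = 0" by (simp add: power_mult_distrib)
    thus "\<exists>n. (fps_const (f $ i) * fps_X ^ i) ^ n = 0" by blast
  qed
qed simp

lemma div_exists:
  fixes q :: "'a::comm_ring_1 poly" and g :: "'a \<Rightarrow> 'b::comm_ring_1"
  assumes q: "q \<in> Qd d" and md: "m \<le> d" and nil: "\<forall>i<m. \<exists>n. coeff q i ^ n = 0"
    and un: "coeff q m dvd 1" and g: "is_rhom g"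
  shows "\<exists>v a. a \<in> Ad d \<and> w = fps_of_poly q * v + fps_of_poly a
           \<and> (fps_map g w = 0 \<longrightarrow> fps_map g v = 0 \<and> map_poly g a = 0)"
proof (cases "(1::'a) = 0")
  case True
  have "0 \<in> Ad d" unfolding Ad_def by simp
  moreover have "w = 0" using True by (rule triv_fps)
  ultimately show ?thesis using g by (intro exI[of _ 0] exI[of _ 0]) (simp add: fps_map_0)
next
  case False
  have dq: "degree q = d" and lq: "lead_coeff q = 1" using q unfolding Qd_def by auto
  have qnz: "q \<noteq> 0" using lq False by auto
  define f where "f = fps_of_poly q"
  define E where "E = fps_cutoff m f"
  have "\<exists>M. E ^ M = 0" unfolding E_def
    by (rule fps_cutoff_nilp) (use nil in \<open>simp add: f_def\<close>)
  then obtain M where EM: "E ^ M = 0" by blast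
  define U where "U = fps_shift m f"
  have U0: "U $ 0 = coeff q m" by (simp add: U_def f_def)
  obtain y where y: "coeff q m * y = 1" using un by (metis dvdE)
  define Ui where "Ui = fps_right_inverse U y"
  have UUi: "U * Ui = 1" unfolding Ui_def by (rule fps_right_inverse) (simp add: U0 y)
  have fs: "fps_X^m * U + E = f" using fps_shift_cutoff'[of m f] by (simp add: U_def E_def)
  have h1: "fps_X^m * U = f - E" using fs by (simp add: eq_diff_eq)
  have "fps_X^m = fps_X^m * (U * Ui)" using UUi by simp
  also have "\<dots> = (fps_X^m * U) * Ui" by (simp only: mult.assoc)
  also have "\<dots> = f * Ui + (- E * Ui)" by (simp only: h1) (simp add: algebra_simps)
  finally have h2: "fps_X^m = f * Ui + (- E * Ui)" .
  obtain Y where Y: "(f * Ui + (- E * Ui)) ^ M = f * Ui * Y + (- E * Ui) ^ M"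
    using split_pow[of "f * Ui" "- E * Ui" M] by blast
  have "- E * Ui = E * (- Ui)" by simp
  hence Z: "(- E * Ui) ^ M = 0" by (simp only: power_mult_distrib EM mult_zero_left)
  have "fps_X^(m*M) = (fps_X^m)^M" by (rule power_mult)
  also have "\<dots> = (f * Ui + (- E * Ui)) ^ M" by (simp only: h2)
  also have "\<dots> = f * Ui * Y + (- E * Ui) ^ M" by (rule Y)
  also have "\<dots> = f * (Ui * Y)" by (simp only: Z) (simp add: mult.assoc)
  finally have "fps_X^(m*M) = f * (Ui * Y)" .
  then obtain N X0 where XN: "fps_X^N = f * X0" by blast
  define P where "P = truncate_fps N w"
  have wdec: "fps_X^N * fps_shift N w + fps_of_poly P = w"
    using fps_shift_cutoff'[of N w] by (simp add: P_def)
  obtain s r where sr: "pseudo_divmod P q = (s, r)" by (metis surj_pair)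
  have Pd: "P = q * s + r" using pseudo_divmod(1)[OF qnz sr] lq by simp
  have rd: "r \<in> Ad d"
  proof -
    have "r = 0 \<or> degree r < d" using pseudo_divmod(2)[OF qnz sr] dq by simp
    thus ?thesis unfolding Ad_def by (auto intro: coeff_eq_0)
  qed
  define v where "v = X0 * fps_shift N w + fps_of_poly s"
  have "fps_of_poly q * v + fps_of_poly r = fps_X^N * fps_shift N w + fps_of_poly P"
    unfolding XN Pd v_def f_def by (simp add: fps_of_poly_add fps_of_poly_mult algebra_simps)
  hence weq: "w = fps_of_poly q * v + fps_of_poly r" using wdec by simp
  have ker: "fps_map g v = 0 \<and> map_poly g r = 0" if w0: "fps_map g w = 0"
  proof -
    have g0: "g 0 = 0" using g by (rule rhom_0)
    have wk: "g (w $ k) = 0" for k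
    proof -
      have "fps_map g w $ k = 0" using w0 by simp
      thus ?thesis by simp
    qed
    have sh0: "fps_map g (fps_shift N w) = 0"
      by (rule fps_ext) (simp add: wk)
    have P0: "map_poly g P = 0"
    proof (rule poly_eqI)
      fix n
      show "coeff (map_poly g P) n = coeff 0 n" using wk g0
        by (simp add: coeff_map_poly P_def coeff_truncate_fps)
    qed
    hence e: "map_poly g q * map_poly g s + map_poly g r = 0"
      using g by (simp add: Pd map_poly_add map_poly_mult)
    have "map_poly g s = 0"
    proof (rule poly_monic_uniq[OF _ _ _ e])
      show "coeff (map_poly g q) d = 1" using lq dq g0 g by (simp add: coeff_map_poly rhom_1)
      show "\<forall>i>d. coeff (map_poly g q) i = 0" using dq g0 by (simp add: coeff_map_poly coeff_eq_0)
      show "\<forall>i\<ge>d. coeff (map_poly g r) i = 0" using rd g0 by (simp add: coeff_map_poly Ad_def)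
    qed
    moreover from this e have "map_poly g r = 0" by simp
    ultimately show ?thesis using g g0 sh0
      by (simp add: v_def fps_map_add fps_map_mult fps_map_poly)
  qed
  show ?thesis using rd weq ker by blast
qed

lemma div_unique:
  fixes q a :: "'a::comm_ring_1 poly"
  assumes q: "q \<in> Qd d" and nil: "\<forall>i<d. \<exists>n. coeff q i ^ n = 0" and a: "a \<in> Ad d"
    and e: "fps_of_poly a + fps_of_poly q * V = 0"
  shows "a = 0 \<and> V = 0"
proof (cases "(1::'a) = 0")
  case True thus ?thesis by (simp add: triv_poly triv_fps)
next
  case False
  have dq: "degree q = d" and lq: "lead_coeff q = 1" using q unfolding Qd_def by auto
  define \<epsilon> where "\<epsilon> = q - monom 1 d"
  have eps: "\<epsilon> = (\<Sum>i<d. monom (coeff q i) i)"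
  proof (rule poly_eqI)
    fix n
    have "coeff (\<Sum>i<d. monom (coeff q i) i) n = (\<Sum>i<d. if i = n then coeff q i else 0)"
      by (simp add: coeff_sum)
    also have "\<dots> = (if n < d then coeff q n else 0)" by (simp add: sum.delta')
    also have "\<dots> = coeff \<epsilon> n"
      using lq dq by (auto simp: \<epsilon>_def coeff_eq_0)
    finally show "coeff \<epsilon> n = coeff (\<Sum>i<d. monom (coeff q i) i) n" by simp
  qed
  have "\<exists>M. \<epsilon> ^ M = 0" unfolding eps
  proof (rule nilp_sum)
    show "\<forall>i\<in>{..<d}. \<exists>n. monom (coeff q i) i ^ n = 0"
    proof
      fix i assume "i \<in> {..<d}"
      then obtain n where "coeff q i ^ n = 0" using nil by auto
      hence "monom (coeff q i) i ^ n = 0" by (simp add: monom_power)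
      thus "\<exists>n. monom (coeff q i) i ^ n = 0" by blast
    qed
  qed simp
  then obtain M where EM: "\<epsilon> ^ M = 0" by blast
  have md: "monom 1 d = q + (- \<epsilon>)" by (simp add: \<epsilon>_def)
  obtain Y where Y: "(q + (- \<epsilon>)) ^ M = q * Y + (- \<epsilon>) ^ M"
    using split_pow[of q "- \<epsilon>" M] by blast
  have "- \<epsilon> = \<epsilon> * (- 1)" by simp
  hence Z: "(- \<epsilon>) ^ M = 0" by (simp only: power_mult_distrib EM mult_zero_left)
  have "monom 1 (d * M) = (monom 1 d) ^ M" by (simp add: monom_power)
  also have "\<dots> = (q + (- \<epsilon>)) ^ M" by (simp only: md)
  also have "\<dots> = q * Y" by (simp only: Y Z add_0_right)
  finally have T: "monom 1 (d * M) = q * Y" .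
  have Ydeg: "i + d \<le> d * M" if "coeff Y i \<noteq> 0" for i
  proof -
    have Yn: "Y \<noteq> 0" using that by auto
    have "i \<le> degree Y" using that by (rule le_degree)
    have "coeff (q * Y) (d + degree Y) = lead_coeff Y"
      using coeff_mult_degree_sum[of q Y] dq lq by simp
    hence "coeff (q * Y) (d + degree Y) \<noteq> 0" using Yn by simp
    hence "d + degree Y \<le> degree (q * Y)" by (rule le_degree)
    also have "degree (q * Y) = d * M" using T[symmetric] False by (simp add: degree_monom_eq)
    finally show ?thesis using \<open>i \<le> degree Y\<close> by simp
  qed
  have XT: "fps_X ^ (d * M) = fps_of_poly q * fps_of_poly Y"
    by (metis T fps_of_poly_monom' fps_of_poly_mult)
  have "fps_of_poly (Y * a) + fps_X ^ (d * M) * V = fps_of_poly Y * (fps_of_poly a + fps_of_poly q * V)"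
    unfolding XT by (simp add: fps_of_poly_mult algebra_simps)
  also have "\<dots> = 0" using e by simp
  finally have e2: "fps_of_poly (Y * a) + fps_X ^ (d * M) * V = 0" .
  have Ya: "coeff (Y * a) n = 0" if "d * M \<le> n" for n
    unfolding coeff_mult
  proof (rule sum.neutral, rule ballI)
    fix i assume "i \<in> {..n}"
    show "coeff Y i * coeff a (n - i) = 0"
    proof (cases "coeff Y i = 0")
      case False
      hence "i + d \<le> d * M" by (rule Ydeg)
      hence "n - i \<ge> d" using that by simp
      thus ?thesis using a unfolding Ad_def by simp
    qed simp
  qed
  have V0: "V = 0"
  proof (rule fps_ext)
    fix n
    have "(fps_of_poly (Y * a) + fps_X ^ (d * M) * V) $ (n + d * M) = 0" using e2 by simp
    hence "coeff (Y * a) (n + d * M) + V $ n = 0" by (simp add: fps_X_power_mult_nth)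
    thus "V $ n = 0 $ n" using Ya[of "n + d * M"] by simp
  qed
  hence "fps_of_poly a = 0" using e by simp
  hence "a = 0" using fps_of_poly_eq_iff[of a 0] by simp
  with V0 show ?thesis by simp
qed

definition NU :: "'a::comm_ring_1 itself \<Rightarrow> bool" where
  "NU _ \<longleftrightarrow> (\<forall>x::'a. \<not> x dvd 1 \<longrightarrow> (\<exists>n. x ^ n = 0))"

lemma NU_field: "NU TYPE('k::field)"
  unfolding NU_def
proof (intro allI impI)
  fix x :: 'k assume "\<not> x dvd 1"
  hence "x = 0" by (metis dvdI right_inverse)
  thus "\<exists>n. x ^ n = 0" by (intro exI[of _ 1]) simp
qed

lemma NU_art: "art_k (\<phi> :: 'k::field \<Rightarrow> 'r::comm_ring_1) \<pi> \<Longrightarrow> NU TYPE('r)"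
  unfolding NU_def using art_nilp[of \<phi> \<pi>] unfolding art_k_def by blast

lemma div_exists2:
  fixes q :: "'a::comm_ring_1 poly" and g :: "'a \<Rightarrow> 'b::comm_ring_1"
  assumes nu: "NU TYPE('a)" and q: "q \<in> Qd d" and g: "is_rhom g"
  shows "\<exists>v a. a \<in> Ad d \<and> w = fps_of_poly q * v + fps_of_poly a
           \<and> (fps_map g w = 0 \<longrightarrow> fps_map g v = 0 \<and> map_poly g a = 0)"
proof -
  have cd: "coeff q d dvd 1" using q unfolding Qd_def by auto
  define m where "m = (LEAST i. coeff q i dvd 1)"
  have md: "m \<le> d" unfolding m_def using cd by (rule Least_le)
  have um: "coeff q m dvd 1" unfolding m_def using cd by (rule LeastI)
  have nil: "\<forall>i<m. \<exists>n. coeff q i ^ n = 0"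
  proof (intro allI impI)
    fix i assume "i < m"
    hence "\<not> coeff q i dvd 1" unfolding m_def by (rule not_less_Least)
    thus "\<exists>n. coeff q i ^ n = 0" using nu unfolding NU_def by blast
  qed
  show ?thesis by (rule div_exists[OF q md nil um g])
qed

lemma bc_dbeta_hom: "is_rhom \<pi> \<Longrightarrow> bc_dbeta_tgt \<pi> (dbeta y) = dbeta (bc_dbeta_src \<pi> y)"
  by (cases y) (simp add: bc_dbeta_tgt_def dbeta_def bc_dbeta_src_def fps_map_add fps_map_mult
      fps_map_poly rhom_0)

lemma bc_alpha_hom: "is_rhom \<pi> \<Longrightarrow> bc_alpha_tgt \<pi> (alpha y) = alpha (bc_alpha_src \<pi> y)"
  by (cases y) (simp add: bc_alpha_tgt_def alpha_def bc_alpha_src_def fps_map_add fps_map_mult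
      fps_map_poly rhom_0)

lemma art_hom_comp:
  assumes "art_k \<phi> \<pi>" "art_k \<phi>' \<pi>'" "art_hom \<phi> \<pi> \<phi>' \<pi>' g"
  shows "map_poly \<pi>' (map_poly g p) = map_poly \<pi> p" "fps_map \<pi>' (fps_map g f) = fps_map \<pi> f"
proof -
  have r: "is_rhom \<pi>'" "is_rhom g" and c: "\<And>x. \<pi>' (g x) = \<pi> x"
    using assms unfolding art_k_def art_hom_def by auto
  have e: "\<pi>' \<circ> g = \<pi>" using c by auto
  show "map_poly \<pi>' (map_poly g p) = map_poly \<pi> p"
    by (simp add: map_poly_map_poly rhom_0 r e)
  show "fps_map \<pi>' (fps_map g f) = fps_map \<pi> f"
    by (simp add: fps_map_comp e)
qed

lemma lift_poly:
  fixes g :: "'a::comm_ring_1 \<Rightarrow> 'b::comm_ring_1"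
  assumes g: "is_rhom g" "surj g" and a: "a' \<in> Ad d"
  shows "\<exists>a. a \<in> Ad d \<and> map_poly g a = a'"
proof -
  define h where "h s = (if s = 0 then 0 else inv g s)" for s
  have h0: "h 0 = 0" by (simp add: h_def)
  have gh: "g (h s) = s" for s
    using g by (simp add: h_def rhom_0 surj_f_inv_f)
  have "map_poly g (map_poly h a') = a'"
    by (rule poly_eqI) (simp add: coeff_map_poly h0 rhom_0[OF g(1)] gh)
  moreover have "map_poly h a' \<in> Ad d" using a h0 by (simp add: Ad_def coeff_map_poly)
  ultimately show ?thesis by blast
qed

lemma lift_fps:
  assumes g: "surj g"
  shows "\<exists>v. fps_map g v = v'"
proof -
  have "fps_map g (fps_map (inv g) v') = v'"
    by (rule fps_ext) (simp add: surj_f_inv_f[OF g])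
  thus ?thesis by blast
qed

lemma div_inj:
  fixes q a1 a2 :: "'a::comm_ring_1 poly"
  assumes q: "q \<in> Qd d" and nil: "\<forall>i<d. \<exists>n. coeff q i ^ n = 0" and u: "u dvd 1"
    and a1: "a1 \<in> Ad d" and a2: "a2 \<in> Ad d"
    and e: "u * fps_of_poly a1 + fps_of_poly q * v1 = u * fps_of_poly a2 + fps_of_poly q * v2"
  shows "a1 = a2 \<and> v1 = v2"
proof -
  obtain ui where uiu: "ui * u = 1" using u by (metis dvdE mult.commute)
  have "fps_of_poly (a1 - a2) + fps_of_poly q * (ui * (v1 - v2))
      = (ui * u) * (fps_of_poly a1 - fps_of_poly a2) + fps_of_poly q * (ui * (v1 - v2))"
    by (simp add: uiu fps_of_poly_diff)
  also have "\<dots> = ui * ((u * fps_of_poly a1 + fps_of_poly q * v1) - (u * fps_of_poly a2 + fps_of_poly q * v2))"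
    by (simp add: algebra_simps)
  also have "\<dots> = 0" by (simp only: e diff_self mult_zero_right)
  finally have e2: "fps_of_poly (a1 - a2) + fps_of_poly q * (ui * (v1 - v2)) = 0" .
  have ad: "a1 - a2 \<in> Ad d" using a1 a2 by (simp add: Ad_def)
  from div_unique[OF q nil ad e2] have h: "a1 - a2 = 0" "ui * (v1 - v2) = 0" by auto
  have "v1 - v2 = (ui * u) * (v1 - v2)" by (simp add: uiu)
  also have "\<dots> = u * (ui * (v1 - v2))" by (simp add: algebra_simps)
  also have "\<dots> = 0" by (simp add: h)
  finally show ?thesis using h by simp
qed

lemma surj_dbeta:
  assumes nu: "NU TYPE('a::comm_ring_1)"
  shows "\<forall>z \<in> (dbeta_tgt d :: ('a poly \<times> 'a fps \<times> 'a fps) set). \<exists>x \<in> dbeta_src d. dbeta x = z"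
proof
  fix z :: "'a poly \<times> 'a fps \<times> 'a fps" assume z: "z \<in> dbeta_tgt d"
  obtain q u w where zq: "z = (q, u, w)" by (cases z) auto
  have q: "q \<in> Qd d" and u: "u dvd 1" using z zq by (auto simp: dbeta_tgt_def LGm_def)
  obtain ui where uui: "u * ui = 1" using u by (metis dvdE)
  obtain v a where a: "a \<in> Ad d" and e: "ui * w = fps_of_poly q * v + fps_of_poly a"
    using div_exists2[OF nu q rhom_id, of "ui * w"] by blast
  have "u * fps_of_poly a + fps_of_poly q * (u * v) = u * (ui * w)"
    by (simp add: e algebra_simps)
  also have "\<dots> = w" by (simp add: mult.assoc[symmetric] uui)
  finally have "dbeta (q, u, a, u * v) = z" by (simp add: dbeta_def zq)
  moreover have "(q, u, a, u * v) \<in> dbeta_src d" using q u a by (simp add: dbeta_src_def LGm_def)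
  ultimately show "\<exists>x \<in> dbeta_src d. dbeta x = z" by blast
qed

lemma surj_alpha:
  assumes nu: "NU TYPE('a::comm_ring_1)"
  shows "\<forall>z \<in> (alpha_tgt d :: ('a poly \<times> 'a fps) set). \<exists>x \<in> alpha_src d. alpha x = z"
proof
  fix z :: "'a poly \<times> 'a fps" assume z: "z \<in> alpha_tgt d"
  obtain q w where zq: "z = (q, w)" by (cases z) auto
  have q: "q \<in> Qd d" using z zq by (auto simp: alpha_tgt_def)
  obtain v a where a: "a \<in> Ad d" and e: "w = fps_of_poly q * v + fps_of_poly a"
    using div_exists2[OF nu q rhom_id, of w] by blast
  have "alpha (q, a, v) = z" by (simp add: alpha_def zq e)
  moreover have "(q, a, v) \<in> alpha_src d" using q a by (simp add: alpha_src_def)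
  ultimately show "\<exists>x \<in> alpha_src d. alpha x = z" by blast
qed

lemma lift_dbeta:
  fixes \<phi> :: "'k::field \<Rightarrow> 'r::comm_ring_1" and \<phi>' :: "'k \<Rightarrow> 's::comm_ring_1"
  assumes A: "art_k \<phi> \<pi>" and A': "art_k \<phi>' \<pi>'" and H: "art_hom \<phi> \<pi> \<phi>' \<pi>' g" and sg: "surj g"
  shows "lifts (dbeta_src d) (dbeta_src d) (dbeta_tgt d)
                 (bc_dbeta_src \<pi>) (bc_dbeta_src \<pi>') (bc_dbeta_tgt \<pi>)
                 (bc_dbeta_src g) (bc_dbeta_tgt g) dbeta dbeta dbeta x"
  unfolding lifts_def
proof (intro ballI impI)
  fix y' :: "'s poly \<times> 's fps \<times> 's poly \<times> 's fps" and z :: "'r poly \<times> 'r fps \<times> 'r fps"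
  assume y': "y' \<in> dbeta_src d" and z: "z \<in> dbeta_tgt d" and ry': "bc_dbeta_src \<pi>' y' = x"
    and rz: "bc_dbeta_tgt \<pi> z = dbeta x" and yz: "dbeta y' = bc_dbeta_tgt g z"
  have g: "is_rhom g" using H unfolding art_hom_def by blast
  have g0: "g 0 = 0" using g by (rule rhom_0)
  obtain q' u' a' v' where y'q: "y' = (q', u', a', v')" by (cases y') auto
  obtain q u w where zq: "z = (q, u, w)" by (cases z) auto
  have q: "q \<in> Qd d" and u: "u dvd 1" using z zq by (auto simp: dbeta_tgt_def LGm_def)
  have a': "a' \<in> Ad d" using y' y'q by (simp add: dbeta_src_def)
  have P: "(q', u', u' * fps_of_poly a' + fps_of_poly q' * v') = (map_poly g q, fps_map g u, fps_map g w)"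
    using yz by (simp only: y'q zq dbeta_def bc_dbeta_tgt_def prod.case)
  have qq: "q' = map_poly g q" using arg_cong[OF P, of fst] by simp
  have uu: "u' = fps_map g u" using arg_cong[OF P, of "\<lambda>x. fst (snd x)"] by simp
  have ww: "u' * fps_of_poly a' + fps_of_poly q' * v' = fps_map g w"
    using arg_cong[OF P, of "\<lambda>x. snd (snd x)"] by simp
  obtain a0 where a0: "a0 \<in> Ad d" and ga0: "map_poly g a0 = a'"
    using lift_poly[OF g sg a'] by blast
  obtain v0 where gv0: "fps_map g v0 = v'" using lift_fps[OF sg] by blast
  obtain ui where uui: "u * ui = 1" using u by (metis dvdE)
  define w1 where "w1 = w - u * fps_of_poly a0 - fps_of_poly q * v0"
  have "fps_map g w1 = fps_map g w - u' * fps_of_poly a' - fps_of_poly q' * v'"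
    by (simp add: w1_def fps_map_diff fps_map_mult fps_map_poly g g0 uu qq ga0 gv0)
  also have "\<dots> = 0" by (simp only: ww[symmetric]) simp
  finally have gw1: "fps_map g w1 = 0" .
  have gw2: "fps_map g (ui * w1) = 0" by (simp add: fps_map_mult g gw1)
  obtain v2 a1 where a1: "a1 \<in> Ad d" and e: "ui * w1 = fps_of_poly q * v2 + fps_of_poly a1"
    and k: "fps_map g v2 = 0" "map_poly g a1 = 0"
    using div_exists2[OF NU_art[OF A] q g, of "ui * w1"] gw2 by blast
  define y where "y = (q, u, a0 + a1, v0 + u * v2)"
  have "y \<in> dbeta_src d" using q u a0 a1 by (simp add: y_def dbeta_src_def LGm_def Ad_def)
  moreover have gy: "bc_dbeta_src g y = y'"
    by (simp add: y_def y'q bc_dbeta_src_def qq uu map_poly_add g ga0 k fps_map_add fps_map_mult gv0)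
  moreover have "bc_dbeta_src \<pi> y = x"
  proof -
    have "bc_dbeta_src \<pi> y = bc_dbeta_src \<pi>' (bc_dbeta_src g y)"
      by (simp add: y_def bc_dbeta_src_def art_hom_comp[OF A A' H])
    thus ?thesis using gy ry' by simp
  qed
  moreover have "dbeta y = z"
  proof -
    have h: "u * fps_of_poly a1 + fps_of_poly q * (u * v2) = w1"
    proof -
      have "u * fps_of_poly a1 + fps_of_poly q * (u * v2) = u * (fps_of_poly q * v2 + fps_of_poly a1)"
        by (simp add: algebra_simps)
      also have "\<dots> = u * (ui * w1)" by (simp only: e)
      also have "\<dots> = w1" by (simp add: mult.assoc[symmetric] uui)
      finally show ?thesis .
    qed
    have "u * fps_of_poly (a0 + a1) + fps_of_poly q * (v0 + u * v2)
        = (u * fps_of_poly a0 + fps_of_poly q * v0) + (u * fps_of_poly a1 + fps_of_poly q * (u * v2))"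
      by (simp add: fps_of_poly_add algebra_simps)
    also have "\<dots> = w" by (simp only: h) (simp add: w1_def)
    finally show ?thesis by (simp add: y_def dbeta_def zq)
  qed
  ultimately show "\<exists>y\<in>dbeta_src d. bc_dbeta_src \<pi> y = x \<and> bc_dbeta_src g y = y' \<and> dbeta y = z"
    by blast
qed

lemma lift_alpha:
  fixes \<phi> :: "'k::field \<Rightarrow> 'r::comm_ring_1" and \<phi>' :: "'k \<Rightarrow> 's::comm_ring_1"
  assumes A: "art_k \<phi> \<pi>" and A': "art_k \<phi>' \<pi>'" and H: "art_hom \<phi> \<pi> \<phi>' \<pi>' g" and sg: "surj g"
  shows "lifts (alpha_src d) (alpha_src d) (alpha_tgt d)
                 (bc_alpha_src \<pi>) (bc_alpha_src \<pi>') (bc_alpha_tgt \<pi>)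
                 (bc_alpha_src g) (bc_alpha_tgt g) alpha alpha alpha x"
  unfolding lifts_def
proof (intro ballI impI)
  fix y' :: "'s poly \<times> 's poly \<times> 's fps" and z :: "'r poly \<times> 'r fps"
  assume y': "y' \<in> alpha_src d" and z: "z \<in> alpha_tgt d" and ry': "bc_alpha_src \<pi>' y' = x"
    and rz: "bc_alpha_tgt \<pi> z = alpha x" and yz: "alpha y' = bc_alpha_tgt g z"
  have g: "is_rhom g" using H unfolding art_hom_def by blast
  have g0: "g 0 = 0" using g by (rule rhom_0)
  obtain q' a' v' where y'q: "y' = (q', a', v')" by (cases y') auto
  obtain q w where zq: "z = (q, w)" by (cases z) auto
  have q: "q \<in> Qd d" using z zq by (auto simp: alpha_tgt_def)
  have a': "a' \<in> Ad d" using y' y'q by (simp add: alpha_src_def)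
  have P: "(q', fps_of_poly q' * v' + fps_of_poly a') = (map_poly g q, fps_map g w)"
    using yz by (simp only: y'q zq alpha_def bc_alpha_tgt_def prod.case)
  have qq: "q' = map_poly g q" using arg_cong[OF P, of fst] by simp
  have ww: "fps_of_poly q' * v' + fps_of_poly a' = fps_map g w"
    using arg_cong[OF P, of snd] by simp
  obtain a0 where a0: "a0 \<in> Ad d" and ga0: "map_poly g a0 = a'"
    using lift_poly[OF g sg a'] by blast
  obtain v0 where gv0: "fps_map g v0 = v'" using lift_fps[OF sg] by blast
  define w1 where "w1 = w - fps_of_poly q * v0 - fps_of_poly a0"
  have "fps_map g w1 = fps_map g w - fps_of_poly q' * v' - fps_of_poly a'"
    by (simp add: w1_def fps_map_diff fps_map_mult fps_map_poly g g0 qq ga0 gv0)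
  also have "\<dots> = 0" by (simp only: ww[symmetric]) simp
  finally have gw1: "fps_map g w1 = 0" .
  obtain v2 a1 where a1: "a1 \<in> Ad d" and e: "w1 = fps_of_poly q * v2 + fps_of_poly a1"
    and k: "fps_map g v2 = 0" "map_poly g a1 = 0"
    using div_exists2[OF NU_art[OF A] q g, of w1] gw1 by blast
  define y where "y = (q, a0 + a1, v0 + v2)"
  have "y \<in> alpha_src d" using q a0 a1 by (simp add: y_def alpha_src_def Ad_def)
  moreover have gy: "bc_alpha_src g y = y'"
    by (simp add: y_def y'q bc_alpha_src_def qq map_poly_add g ga0 k fps_map_add gv0)
  moreover have "bc_alpha_src \<pi> y = x"
  proof -
    have "bc_alpha_src \<pi> y = bc_alpha_src \<pi>' (bc_alpha_src g y)"
      by (simp add: y_def bc_alpha_src_def art_hom_comp[OF A A' H])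
    thus ?thesis using gy ry' by simp
  qed
  moreover have "alpha y = z"
  proof -
    have "fps_of_poly q * (v0 + v2) + fps_of_poly (a0 + a1)
        = (fps_of_poly q * v0 + fps_of_poly a0) + (fps_of_poly q * v2 + fps_of_poly a1)"
      by (simp add: fps_of_poly_add algebra_simps)
    also have "\<dots> = w" by (simp only: e[symmetric]) (simp add: w1_def)
    finally show ?thesis by (simp add: y_def alpha_def zq)
  qed
  ultimately show "\<exists>y\<in>alpha_src d. bc_alpha_src \<pi> y = x \<and> bc_alpha_src g y = y' \<and> alpha y = z"
    by blast
qed

lemma nil_of_red:
  fixes \<phi> :: "'k::field \<Rightarrow> 'r::comm_ring_1"
  assumes A: "art_k \<phi> \<pi>" and r: "map_poly \<pi> q = monom 1 d"
  shows "\<forall>i<d. \<exists>n. coeff q i ^ n = 0"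
proof (intro allI impI)
  fix i assume i: "i < d"
  have p: "is_rhom \<pi>" using A unfolding art_k_def by blast
  have "coeff (map_poly \<pi> q) i = 0" using r i by simp
  hence "\<pi> (coeff q i) = 0" by (simp add: coeff_map_poly rhom_0[OF p])
  thus "\<exists>n. coeff q i ^ n = 0" by (rule art_nilp[OF A])
qed

lemma nil_monom: "\<forall>i<d. \<exists>n. coeff (monom (1::'a::comm_ring_1) d) i ^ n = 0"
  by (auto intro: exI[of _ 1])

lemma bij_dbeta:
  fixes \<phi> :: "'k::field \<Rightarrow> 'r::comm_ring_1"
  assumes A: "art_k \<phi> \<pi>" and x: "x \<in> dbeta_src d" and fx: "fst x = monom 1 d"
  shows "bij_betw dbeta {y \<in> dbeta_src d. bc_dbeta_src \<pi> y = x}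
                        {z \<in> dbeta_tgt d. bc_dbeta_tgt \<pi> z = dbeta x}"
proof -
  have p: "is_rhom \<pi>" using A unfolding art_k_def by blast
  have p0: "\<pi> 0 = 0" using p by (rule rhom_0)
  obtain q0 u0 a0 v0 where xq: "x = (q0, u0, a0, v0)" by (cases x) auto
  have q0: "q0 = monom 1 d" using fx xq by simp
  have q0Q: "q0 \<in> Qd d" and u0: "u0 dvd 1" and a0: "a0 \<in> Ad d"
    using x xq by (auto simp: dbeta_src_def LGm_def)
  show ?thesis unfolding bij_betw_def
  proof (intro conjI)
    show "inj_on dbeta {y \<in> dbeta_src d. bc_dbeta_src \<pi> y = x}"
    proof (rule inj_onI)
      fix y1 y2 assume y1: "y1 \<in> {y \<in> dbeta_src d. bc_dbeta_src \<pi> y = x}"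
        and y2: "y2 \<in> {y \<in> dbeta_src d. bc_dbeta_src \<pi> y = x}" and e: "dbeta y1 = dbeta y2"
      obtain q1 u1 a1 v1 where y1q: "y1 = (q1, u1, a1, v1)" by (cases y1) auto
      obtain q2 u2 a2 v2 where y2q: "y2 = (q2, u2, a2, v2)" by (cases y2) auto
      have P: "(q1, u1, u1 * fps_of_poly a1 + fps_of_poly q1 * v1) = (q2, u2, u2 * fps_of_poly a2 + fps_of_poly q2 * v2)"
        using e by (simp only: y1q y2q dbeta_def prod.case)
      have qq: "q1 = q2" using arg_cong[OF P, of fst] by simp
      have uu: "u1 = u2" using arg_cong[OF P, of "\<lambda>x. fst (snd x)"] by simp
      have ww: "u1 * fps_of_poly a1 + fps_of_poly q1 * v1 = u1 * fps_of_poly a2 + fps_of_poly q1 * v2"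
        using arg_cong[OF P, of "\<lambda>x. snd (snd x)"] qq uu by simp
      have q1: "q1 \<in> Qd d" and u1: "u1 dvd 1" and a1: "a1 \<in> Ad d" and a2: "a2 \<in> Ad d"
        using y1 y2 y1q y2q by (auto simp: dbeta_src_def LGm_def)
      have "map_poly \<pi> q1 = monom 1 d" using y1 y1q xq q0 by (simp add: bc_dbeta_src_def)
      hence nil: "\<forall>i<d. \<exists>n. coeff q1 i ^ n = 0" by (rule nil_of_red[OF A])
      from div_inj[OF q1 nil u1 a1 a2 ww] have "a1 = a2" "v1 = v2" by auto
      thus "y1 = y2" using y1q y2q qq uu by simp
    qed
  next
    show "dbeta ` {y \<in> dbeta_src d. bc_dbeta_src \<pi> y = x} = {z \<in> dbeta_tgt d. bc_dbeta_tgt \<pi> z = dbeta x}"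
    proof (intro equalityI subsetI)
      fix z assume "z \<in> dbeta ` {y \<in> dbeta_src d. bc_dbeta_src \<pi> y = x}"
      then obtain y where y: "y \<in> dbeta_src d" "bc_dbeta_src \<pi> y = x" and zy: "z = dbeta y" by blast
      have "z \<in> dbeta_tgt d" using y(1) zy
        by (cases y) (auto simp: dbeta_src_def dbeta_tgt_def dbeta_def)
      moreover have "bc_dbeta_tgt \<pi> z = dbeta x" using zy y(2) by (simp add: bc_dbeta_hom[OF p])
      ultimately show "z \<in> {z \<in> dbeta_tgt d. bc_dbeta_tgt \<pi> z = dbeta x}" by blast
    next
      fix z assume z: "z \<in> {z \<in> dbeta_tgt d. bc_dbeta_tgt \<pi> z = dbeta x}"
      obtain q u w where zq: "z = (q, u, w)" by (cases z) auto
      have q: "q \<in> Qd d" and u: "u dvd 1" using z zq by (auto simp: dbeta_tgt_def LGm_def)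
      have P: "(map_poly \<pi> q, fps_map \<pi> u, fps_map \<pi> w) = (q0, u0, u0 * fps_of_poly a0 + fps_of_poly q0 * v0)"
        using z by (simp only: zq xq mem_Collect_eq dbeta_def bc_dbeta_tgt_def prod.case)
      have qr: "map_poly \<pi> q = q0" using arg_cong[OF P, of fst] by simp
      have ur: "fps_map \<pi> u = u0" using arg_cong[OF P, of "\<lambda>x. fst (snd x)"] by simp
      obtain ui where uui: "u * ui = 1" using u by (metis dvdE)
      obtain v a where a: "a \<in> Ad d" and e: "ui * w = fps_of_poly q * v + fps_of_poly a"
        using div_exists2[OF NU_art[OF A] q rhom_id, of "ui * w"] by blast
      define y where "y = (q, u, a, u * v)"
      have ys: "y \<in> dbeta_src d" using q u a by (simp add: y_def dbeta_src_def LGm_def)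
      have dy: "dbeta y = z"
      proof -
        have "u * fps_of_poly a + fps_of_poly q * (u * v) = u * (ui * w)"
          by (simp add: e algebra_simps)
        also have "\<dots> = w" by (simp add: mult.assoc[symmetric] uui)
        finally show ?thesis by (simp add: dbeta_def zq y_def)
      qed
      have "bc_dbeta_src \<pi> y = x"
      proof -
        define a' where "a' = map_poly \<pi> a"
        define v' where "v' = fps_map \<pi> (u * v)"
        have by0: "bc_dbeta_src \<pi> y = (q0, u0, a', v')"
          by (simp add: bc_dbeta_src_def y_def a'_def v'_def qr ur)
        have "dbeta (bc_dbeta_src \<pi> y) = bc_dbeta_tgt \<pi> (dbeta y)" by (simp add: bc_dbeta_hom[OF p])
        also have "\<dots> = dbeta x" using dy z by simp
        finally have "dbeta (q0, u0, a', v') = dbeta (q0, u0, a0, v0)" using by0 xq by simp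
        hence ee: "u0 * fps_of_poly a' + fps_of_poly q0 * v' = u0 * fps_of_poly a0 + fps_of_poly q0 * v0"
          by (simp add: dbeta_def)
        have a'd: "a' \<in> Ad d" using a p0 by (simp add: a'_def Ad_def coeff_map_poly)
        have nil0: "\<forall>i<d. \<exists>n. coeff q0 i ^ n = 0" unfolding q0 by (rule nil_monom)
        from div_inj[OF q0Q nil0 u0 a'd a0 ee] have "a' = a0" "v' = v0" by auto
        thus ?thesis using by0 xq by simp
      qed
      thus "z \<in> dbeta ` {y \<in> dbeta_src d. bc_dbeta_src \<pi> y = x}" using ys dy by blast
    qed
  qed
qed

lemma bij_alpha:
  fixes \<phi> :: "'k::field \<Rightarrow> 'r::comm_ring_1"
  assumes A: "art_k \<phi> \<pi>" and x: "x \<in> alpha_src d" and fx: "fst x = monom 1 d"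
  shows "bij_betw alpha {y \<in> alpha_src d. bc_alpha_src \<pi> y = x}
                        {z \<in> alpha_tgt d. bc_alpha_tgt \<pi> z = alpha x}"
proof -
  have p: "is_rhom \<pi>" using A unfolding art_k_def by blast
  have p0: "\<pi> 0 = 0" using p by (rule rhom_0)
  obtain q0 a0 v0 where xq: "x = (q0, a0, v0)" by (cases x) auto
  have q0: "q0 = monom 1 d" using fx xq by simp
  have q0Q: "q0 \<in> Qd d" and a0: "a0 \<in> Ad d"
    using x xq by (auto simp: alpha_src_def)
  show ?thesis unfolding bij_betw_def
  proof (intro conjI)
    show "inj_on alpha {y \<in> alpha_src d. bc_alpha_src \<pi> y = x}"
    proof (rule inj_onI)
      fix y1 y2 assume y1: "y1 \<in> {y \<in> alpha_src d. bc_alpha_src \<pi> y = x}"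
        and y2: "y2 \<in> {y \<in> alpha_src d. bc_alpha_src \<pi> y = x}" and e: "alpha y1 = alpha y2"
      obtain q1 a1 v1 where y1q: "y1 = (q1, a1, v1)" by (cases y1) auto
      obtain q2 a2 v2 where y2q: "y2 = (q2, a2, v2)" by (cases y2) auto
      have P: "(q1, fps_of_poly q1 * v1 + fps_of_poly a1) = (q2, fps_of_poly q2 * v2 + fps_of_poly a2)"
        using e by (simp only: y1q y2q alpha_def prod.case)
      have qq: "q1 = q2" using arg_cong[OF P, of fst] by simp
      have ww: "1 * fps_of_poly a1 + fps_of_poly q1 * v1 = 1 * fps_of_poly a2 + fps_of_poly q1 * v2"
        using arg_cong[OF P, of snd] qq by (simp add: add.commute)
      have q1: "q1 \<in> Qd d" and a1: "a1 \<in> Ad d" and a2: "a2 \<in> Ad d"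
        using y1 y2 y1q y2q by (auto simp: alpha_src_def)
      have "map_poly \<pi> q1 = monom 1 d" using y1 y1q xq q0 by (simp add: bc_alpha_src_def)
      hence nil: "\<forall>i<d. \<exists>n. coeff q1 i ^ n = 0" by (rule nil_of_red[OF A])
      from div_inj[OF q1 nil one_dvd a1 a2 ww] have "a1 = a2" "v1 = v2" by auto
      thus "y1 = y2" using y1q y2q qq by simp
    qed
  next
    show "alpha ` {y \<in> alpha_src d. bc_alpha_src \<pi> y = x} = {z \<in> alpha_tgt d. bc_alpha_tgt \<pi> z = alpha x}"
    proof (intro equalityI subsetI)
      fix z assume "z \<in> alpha ` {y \<in> alpha_src d. bc_alpha_src \<pi> y = x}"
      then obtain y where y: "y \<in> alpha_src d" "bc_alpha_src \<pi> y = x" and zy: "z = alpha y" by blast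
      have "z \<in> alpha_tgt d" using y(1) zy
        by (cases y) (auto simp: alpha_src_def alpha_tgt_def alpha_def)
      moreover have "bc_alpha_tgt \<pi> z = alpha x" using zy y(2) by (simp add: bc_alpha_hom[OF p])
      ultimately show "z \<in> {z \<in> alpha_tgt d. bc_alpha_tgt \<pi> z = alpha x}" by blast
    next
      fix z assume z: "z \<in> {z \<in> alpha_tgt d. bc_alpha_tgt \<pi> z = alpha x}"
      obtain q w where zq: "z = (q, w)" by (cases z) auto
      have q: "q \<in> Qd d" using z zq by (auto simp: alpha_tgt_def)
      have P: "(map_poly \<pi> q, fps_map \<pi> w) = (q0, fps_of_poly q0 * v0 + fps_of_poly a0)"
        using z by (simp only: zq xq mem_Collect_eq alpha_def bc_alpha_tgt_def prod.case)
      have qr: "map_poly \<pi> q = q0" using arg_cong[OF P, of fst] by simp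
      obtain v a where a: "a \<in> Ad d" and e: "w = fps_of_poly q * v + fps_of_poly a"
        using div_exists2[OF NU_art[OF A] q rhom_id, of w] by blast
      define y where "y = (q, a, v)"
      have ys: "y \<in> alpha_src d" using q a by (simp add: y_def alpha_src_def)
      have dy: "alpha y = z" by (simp add: alpha_def zq y_def e)
      have "bc_alpha_src \<pi> y = x"
      proof -
        define a' where "a' = map_poly \<pi> a"
        define v' where "v' = fps_map \<pi> v"
        have by0: "bc_alpha_src \<pi> y = (q0, a', v')"
          by (simp add: bc_alpha_src_def y_def a'_def v'_def qr)
        have "alpha (bc_alpha_src \<pi> y) = bc_alpha_tgt \<pi> (alpha y)" by (simp add: bc_alpha_hom[OF p])
        also have "\<dots> = alpha x" using dy z by simp
        finally have "alpha (q0, a', v') = alpha (q0, a0, v0)" using by0 xq by simp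
        hence ee: "1 * fps_of_poly a' + fps_of_poly q0 * v' = 1 * fps_of_poly a0 + fps_of_poly q0 * v0"
          by (simp add: alpha_def add.commute)
        have a'd: "a' \<in> Ad d" using a p0 by (simp add: a'_def Ad_def coeff_map_poly)
        have nil0: "\<forall>i<d. \<exists>n. coeff q0 i ^ n = 0" unfolding q0 by (rule nil_monom)
        from div_inj[OF q0Q nil0 one_dvd a'd a0 ee] have "a' = a0" "v' = v0" by auto
        thus ?thesis using by0 xq by simp
      qed
      thus "z \<in> alpha ` {y \<in> alpha_src d. bc_alpha_src \<pi> y = x}" using ys dy by blast
    qed
  qed
qed


theorem proposition4p1:
  fixes d :: nat
  shows "(\<forall>z \<in> (dbeta_tgt d :: ('k::field poly \<times> 'k fps \<times> 'k fps) set).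
            \<exists>x \<in> dbeta_src d. dbeta x = z)
       \<and> (\<forall>z \<in> (alpha_tgt d :: ('k poly \<times> 'k fps) set). \<exists>x \<in> alpha_src d. alpha x = z)
       \<and> (\<forall>(\<phi> :: 'k \<Rightarrow> 'r::comm_ring_1) \<pi> (\<phi>' :: 'k \<Rightarrow> 's::comm_ring_1) \<pi>' g.
            art_k \<phi> \<pi> \<and> art_k \<phi>' \<pi>' \<and> art_hom \<phi> \<pi> \<phi>' \<pi>' g \<and> surj g \<longrightarrow>
            (\<forall>x \<in> dbeta_src d.
               lifts (dbeta_src d) (dbeta_src d) (dbeta_tgt d)
                 (bc_dbeta_src \<pi>) (bc_dbeta_src \<pi>') (bc_dbeta_tgt \<pi>)
                 (bc_dbeta_src g) (bc_dbeta_tgt g) dbeta dbeta dbeta x)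
          \<and> (\<forall>x \<in> alpha_src d.
               lifts (alpha_src d) (alpha_src d) (alpha_tgt d)
                 (bc_alpha_src \<pi>) (bc_alpha_src \<pi>') (bc_alpha_tgt \<pi>)
                 (bc_alpha_src g) (bc_alpha_tgt g) alpha alpha alpha x))
       \<and> (\<forall>(\<phi> :: 'k \<Rightarrow> 'r) \<pi>. art_k \<phi> \<pi> \<longrightarrow>
            (\<forall>x \<in> dbeta_src d. fst x = monom 1 d \<longrightarrow>
               bij_betw dbeta {y \<in> dbeta_src d. bc_dbeta_src \<pi> y = x}
                              {z \<in> dbeta_tgt d. bc_dbeta_tgt \<pi> z = dbeta x})
          \<and> (\<forall>x \<in> alpha_src d. fst x = monom 1 d \<longrightarrow>
               bij_betw alpha {y \<in> alpha_src d. bc_alpha_src \<pi> y = x}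
                              {z \<in> alpha_tgt d. bc_alpha_tgt \<pi> z = alpha x}))"
  apply (intro conjI)
     apply (rule surj_dbeta[OF NU_field])
    apply (rule surj_alpha[OF NU_field])
   apply (blast intro: lift_dbeta lift_alpha)
  apply (blast intro: bij_dbeta bij_alpha)
  done

end
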